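(* Let $\varphi$ be an increasing concave function on $(0,\infty)$ with $\varphi(0^+)=0$. Then the Lorentz space $\Lambda_\varphi$ on $(0,\infty)$ contains a lattice isometric copy of $\ell_\infty$ if and only if $\varphi(\infty)=\lim_{t\to\infty}\varphi(t)<\infty$.
   Context: The Lorentz space $\Lambda_\varphi$ consists of measurable $f$ on $(0,\infty)$ with $\|f\|_{\Lambda_\varphi}=\int_0^\infty f^*(t)\,d\varphi(t)=\varphi(0^+)\|f\|_\infty+\int_0^\infty f^*(t)\varphi'(t)\,dt<\infty$, where $f^*$ is the non-increasing rearrangement of $|f|$. A lattice isometric copy of $\ell_\infty$ is the image of a linear isometric embedding $T:\ell_\infty\to\Lambda_\varphi$ that is a lattice homomorphism. *)

theory Defs
  imports "HOL-Analysis.Analysis"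
begin

definition halfline :: "real measure" where
  "halfline = restrict_space lebesgue {0<..}"

definition distfun :: "(real \<Rightarrow> real) \<Rightarrow> ennreal \<Rightarrow> ennreal" where
  "distfun f s = emeasure halfline {x \<in> space halfline. ennreal \<bar>f x\<bar> > s}"

definition rearr :: "(real \<Rightarrow> real) \<Rightarrow> real \<Rightarrow> ennreal" where
  "rearr f t = Inf {s. distfun f s \<le> ennreal t}"

text \<open>Extension of phi by 0 on (-infinity,0]; with phi(0+)=0 this is continuous and non-decreasing,
  and its Lebesgue--Stieltjes measure is d phi.\<close>
definition phi_ext :: "(real \<Rightarrow> real) \<Rightarrow> real \<Rightarrow> real" where
  "phi_ext \<phi> t = (if t \<le> 0 then 0 else \<phi> t)"

definition lorentz_norm :: "(real \<Rightarrow> real) \<Rightarrow> (real \<Rightarrow> real) \<Rightarrow> ennreal" where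
  "lorentz_norm \<phi> f = (\<integral>\<^sup>+ t. rearr f t * indicator {0<..} t \<partial>interval_measure (phi_ext \<phi>))"

definition in_lorentz :: "(real \<Rightarrow> real) \<Rightarrow> (real \<Rightarrow> real) \<Rightarrow> bool" where
  "in_lorentz \<phi> f \<longleftrightarrow> f \<in> borel_measurable halfline \<and> lorentz_norm \<phi> f < \<infinity>"

definition linf :: "(nat \<Rightarrow> real) set" where
  "linf = {x. bounded (range x)}"

definition linf_norm :: "(nat \<Rightarrow> real) \<Rightarrow> real" where
  "linf_norm x = (SUP n. \<bar>x n\<bar>)"

text \<open>A linear isometric lattice-homomorphic embedding of ell_infinity into Lambda_phi
  (elements of Lambda_phi are identified when equal a.e. on (0,infinity)).\<close>
definition lattice_isometric_embedding ::
  "(real \<Rightarrow> real) \<Rightarrow> ((nat \<Rightarrow> real) \<Rightarrow> (real \<Rightarrow> real)) \<Rightarrow> bool" where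
  "lattice_isometric_embedding \<phi> T \<longleftrightarrow>
     (\<forall>x\<in>linf. in_lorentz \<phi> (T x)) \<and>
     (\<forall>x\<in>linf. \<forall>y\<in>linf. \<forall>a b. AE t in halfline.
         T (\<lambda>n. a * x n + b * y n) t = a * T x t + b * T y t) \<and>
     (\<forall>x\<in>linf. \<forall>y\<in>linf. AE t in halfline.
         T (\<lambda>n. max (x n) (y n)) t = max (T x t) (T y t)) \<and>
     (\<forall>x\<in>linf. lorentz_norm \<phi> (T x) = ennreal (linf_norm x))"

definition contains_lattice_isometric_linf :: "(real \<Rightarrow> real) \<Rightarrow> bool" where
  "contains_lattice_isometric_linf \<phi> \<longleftrightarrow> (\<exists>T. lattice_isometric_embedding \<phi> T)"

end

theory Submission
  imports Defs
begin


lemma phi_ext_mono: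
  assumes mono: "mono_on {0<..} \<phi>" and pos: "\<forall>t>0. \<phi> t > 0"
  shows "x \<le> y \<Longrightarrow> phi_ext \<phi> x \<le> phi_ext \<phi> y"
  using pos by (auto simp: phi_ext_def intro: mono_onD[OF mono] less_imp_le)

lemma phi_ext_rc:
  assumes concave: "concave_on {0<..} \<phi>" and lim0: "(\<phi> \<longlongrightarrow> 0) (at_right 0)"
  shows "continuous (at_right a) (phi_ext \<phi>)"
proof -
  have cont: "continuous_on {0<..} \<phi>"
  proof -
    have "continuous_on {0<..} (\<lambda>x. - \<phi> x)"
      using concave unfolding concave_on_def by (intro convex_on_continuous) auto
    then have "continuous_on {0<..} (\<lambda>x. - (- \<phi> x))" by (rule continuous_on_minus)
    then show ?thesis by simp
  qed
  show ?thesis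
  proof (cases "a < 0")
    case True
    have ev: "eventually (\<lambda>x. phi_ext \<phi> x = 0) (at_right a)"
      using eventually_at_right[of a 0] True
      by (auto elim!: eventually_mono simp: phi_ext_def)
    have "((\<lambda>x. 0::real) \<longlongrightarrow> phi_ext \<phi> a) (at_right a)" using True by (simp add: phi_ext_def)
    then have "(phi_ext \<phi> \<longlongrightarrow> phi_ext \<phi> a) (at_right a)"
      by (rule Lim_transform_eventually) (use ev in \<open>auto elim!: eventually_mono\<close>)
    then show ?thesis by (simp add: continuous_within)
  next
    case False
    have ev: "eventually (\<lambda>x. \<phi> x = phi_ext \<phi> x) (at_right a)"
      using eventually_at_right_less[of a] False
      by (auto elim!: eventually_mono simp: phi_ext_def)
    have "(\<phi> \<longlongrightarrow> phi_ext \<phi> a) (at_right a)"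
    proof (cases "a = 0")
      case True then show ?thesis using lim0 by (simp add: phi_ext_def)
    next
      case False
      with \<open>\<not> a < 0\<close> have "a > 0" by simp
      then have "isCont \<phi> a" using cont continuous_on_eq_continuous_at[of "{0<..}" \<phi>] by auto
      then have "(\<phi> \<longlongrightarrow> \<phi> a) (at_right a)"
        by (simp add: isCont_def filterlim_at_split)
      then show ?thesis using \<open>a > 0\<close> by (simp add: phi_ext_def)
    qed
    then have "(phi_ext \<phi> \<longlongrightarrow> phi_ext \<phi> a) (at_right a)"
      by (rule Lim_transform_eventually) (use ev in \<open>auto elim!: eventually_mono\<close>)
    then show ?thesis by (simp add: continuous_within)
  qed
qed

lemma mu_total:
  assumes mono: "mono_on {0<..} \<phi>" and pos: "\<forall>t>0. \<phi> t > 0"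
    and concave: "concave_on {0<..} \<phi>" and lim0: "(\<phi> \<longlongrightarrow> 0) (at_right 0)"
  shows "emeasure (interval_measure (phi_ext \<phi>)) {0<..} = (SUP n::nat. ennreal (phi_ext \<phi> (real n)))"
proof -
  let ?A = "\<lambda>n::nat. {0<..real n}"
  have "(SUP n. emeasure (interval_measure (phi_ext \<phi>)) (?A n)) = emeasure (interval_measure (phi_ext \<phi>)) (\<Union> (range ?A))"
    by (rule SUP_emeasure_incseq) (auto simp: incseq_def)
  moreover have "\<Union> (range ?A) = {0<..}"
    by (auto intro: real_arch_simple)
  moreover have "emeasure (interval_measure (phi_ext \<phi>)) (?A n) = ennreal (phi_ext \<phi> (real n))" for n
    by (subst emeasure_interval_measure_Ioc[OF _ phi_ext_mono[OF mono pos] phi_ext_rc[OF concave lim0]])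
       (auto simp: phi_ext_def)
  ultimately show ?thesis by simp
qed



definition idx :: "real \<Rightarrow> nat" where "idx t = fst (prod_decode (nat \<lfloor>t\<rfloor>))"

lemma halfline_meas:
  assumes "f \<in> borel_measurable borel"
  shows "f \<in> borel_measurable halfline"
  unfolding halfline_def
  by (rule measurable_restrict_space1, rule measurable_completion) (use assms in simp)

lemma idx_comp_meas: "(\<lambda>t. c (idx t) :: real) \<in> borel_measurable halfline"
proof (rule halfline_meas)
  have "(\<lambda>k::int. c (fst (prod_decode (nat k)))) \<in> measurable (count_space UNIV) borel" by simp
  from measurable_compose[OF measurable_real_floor this]
  show "(\<lambda>t. c (idx t)) \<in> borel_measurable borel" by (simp add: idx_def o_def)
qed

lemma space_halfline [simp]: "space halfline = {0<..}"
  by (simp add: halfline_def)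

lemma emeasure_halfline: "A \<in> sets lebesgue \<Longrightarrow> A \<subseteq> {0<..} \<Longrightarrow> emeasure halfline A = emeasure lebesgue A"
  unfolding halfline_def by (rule emeasure_restrict_space) auto

lemma idx_infinite:
  assumes S: "S \<in> sets halfline" and sub: "{t. t > 0 \<and> idx t = n} \<subseteq> S"
  shows "emeasure halfline S = top"
proof -
  have "of_nat m \<le> emeasure halfline S" for m
  proof -
    define p where "p j = real (prod_encode (n, j))" for j
    define B where "B j = {p j<..<p j + 1}" for j
    have Bsub: "B j \<subseteq> {t. t > 0 \<and> idx t = n}" for j
    proof
      fix t assume "t \<in> B j"
      then have t: "p j < t" "t < p j + 1" by (auto simp: B_def)
      have "\<lfloor>t\<rfloor> = int (prod_encode (n, j))"
        using t unfolding p_def by (intro floor_unique) auto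
      then show "t \<in> {t. t > 0 \<and> idx t = n}" using t by (auto simp: idx_def p_def intro: le_less_trans[of 0 "p j"])
    qed
    have disj: "disjoint_family_on B {..<m}"
    proof (auto simp: disjoint_family_on_def)
      fix i j t assume ij: "i \<noteq> j" and ti: "t \<in> B i" and tj: "t \<in> B j"
      have "\<lfloor>t\<rfloor> = int (prod_encode (n, i))" "\<lfloor>t\<rfloor> = int (prod_encode (n, j))"
        using ti tj unfolding B_def p_def by (auto intro!: floor_unique)
      then have "prod_encode (n, i) = prod_encode (n, j)" by simp
      then show False using ij by (metis prod_encode_eq prod.inject)
    qed
    have Bpos: "B j \<subseteq> {0<..}" for j using Bsub[of j] by auto
    have Bsets: "B j \<in> sets halfline" for j
      using Bpos[of j] unfolding halfline_def by (subst sets_restrict_space_iff) (auto simp: B_def)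
    have "emeasure halfline (\<Union>j<m. B j) = (\<Sum>j<m. emeasure halfline (B j))"
      by (rule sum_emeasure[symmetric]) (use disj Bsets in auto)
    also have "\<dots> = (\<Sum>j<m. 1)"
    proof (rule sum.cong)
      fix j assume "j \<in> {..<m}"
      have "emeasure halfline (B j) = emeasure lebesgue (B j)"
        using Bsub[of j] by (intro emeasure_halfline) (auto simp: B_def)
      also have "\<dots> = 1" by (simp add: B_def)
      finally show "emeasure halfline (B j) = 1" .
    qed simp
    also have "\<dots> = of_nat m" by simp
    finally have "emeasure halfline (\<Union>j<m. B j) = of_nat m" .
    moreover have "emeasure halfline (\<Union>j<m. B j) \<le> emeasure halfline S"
      by (rule emeasure_mono) (use Bsub sub S in auto)
    ultimately show ?thesis by simp
  qed
  then have "(SUP m. of_nat m :: ennreal) \<le> emeasure halfline S" by (intro SUP_least) auto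
  then show ?thesis by (simp add: ennreal_SUP_of_nat_eq_top top_unique)
qed



lemma distfun_sets:
  assumes [measurable]: "f \<in> borel_measurable halfline"
  shows "{x \<in> space halfline. s < ennreal \<bar>f x\<bar>} \<in> sets halfline"
  by measurable

lemma rearr_idx:
  assumes b: "bounded (range c)"
  shows "rearr (\<lambda>t. c (idx t)) t = ennreal (SUP n. \<bar>c n\<bar>)"
proof -
  define M where "M = (SUP n. \<bar>c n\<bar>)"
  have bdd: "bdd_above (range (\<lambda>n. \<bar>c n\<bar>))"
    using b unfolding bounded_iff bdd_above_def by (auto simp: real_norm_def)
  have le: "\<bar>c n\<bar> \<le> M" for n unfolding M_def by (rule cSUP_upper[OF _ bdd]) simp
  have "{s. distfun (\<lambda>t. c (idx t)) s \<le> ennreal t} = {ennreal M..}"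
  proof (intro set_eqI iffI)
    fix s assume "s \<in> {ennreal M..}"
    then have "{x \<in> space halfline. ennreal \<bar>c (idx x)\<bar> > s} = {}"
      using le by (auto intro: ennreal_leI order.trans simp: not_less)
      (meson ennreal_leI le leD order_trans)
    then show "s \<in> {s. distfun (\<lambda>t. c (idx t)) s \<le> ennreal t}"
      unfolding distfun_def mem_Collect_eq by (simp only: emeasure_empty) simp
  next
    fix s assume s: "s \<in> {s. distfun (\<lambda>t. c (idx t)) s \<le> ennreal t}"
    show "s \<in> {ennreal M..}"
    proof (rule ccontr)
      assume "s \<notin> {ennreal M..}"
      then have sl: "s < ennreal M" by simp
      then obtain r where r: "s = ennreal r" "0 \<le> r" by (cases s rule: ennreal_cases) auto
      with sl have "r < M" by (simp add: ennreal_less_iff)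
      then obtain n where n: "r < \<bar>c n\<bar>" unfolding M_def using less_cSUP_iff[OF _ bdd] by auto
      have "emeasure halfline {x \<in> space halfline. s < ennreal \<bar>c (idx x)\<bar>} = top"
      proof (rule idx_infinite)
        show "{x \<in> space halfline. s < ennreal \<bar>c (idx x)\<bar>} \<in> sets halfline"
          by (rule distfun_sets) (rule idx_comp_meas)
        show "{t. 0 < t \<and> idx t = n} \<subseteq> {x \<in> space halfline. s < ennreal \<bar>c (idx x)\<bar>}"
          using n r by (auto simp: ennreal_less_iff)
      qed
      with s show False by (simp add: distfun_def top_unique)
    qed
  qed
  then show ?thesis unfolding rearr_def M_def by simp
qed



lemma SUP_div:
  fixes f :: "nat \<Rightarrow> real"
  assumes L: "L > 0" and bdd: "bdd_above (range f)"
  shows "(SUP n. f n / L) = (SUP n. f n) / L"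
proof (rule antisym)
  show "(SUP n. f n / L) \<le> (SUP n. f n) / L"
  proof (rule cSUP_least)
    fix n show "f n / L \<le> (SUP n. f n) / L"
      by (rule divide_right_mono[OF cSUP_upper[OF _ bdd]]) (use L in auto)
  qed simp
  have bdd2: "bdd_above (range (\<lambda>n. f n / L))"
    using bdd L by (auto simp: bdd_above_def intro: divide_right_mono less_imp_le)
  have "(SUP n. f n) \<le> L * (SUP n. f n / L)"
  proof (rule cSUP_least)
    fix n
    have "f n / L \<le> (SUP n. f n / L)" by (rule cSUP_upper[OF _ bdd2]) simp
    then show "f n \<le> L * (SUP n. f n / L)" using L by (simp add: field_simps)
  qed simp
  then show "(SUP n. f n) / L \<le> (SUP n. f n / L)" using L by (simp add: field_simps)
qed

lemma backward:
  fixes \<phi> :: "real \<Rightarrow> real"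
  assumes mono: "mono_on {0<..} \<phi>"
    and concave: "concave_on {0<..} \<phi>"
    and pos: "\<forall>t>0. \<phi> t > 0"
    and lim0: "(\<phi> \<longlongrightarrow> 0) (at_right 0)"
    and lim: "(\<phi> \<longlongrightarrow> L) at_top"
  shows "contains_lattice_isometric_linf \<phi>"
proof -
  have seq: "(\<lambda>n. phi_ext \<phi> (real n)) \<longlonglongrightarrow> L"
  proof -
    have "(\<lambda>n. \<phi> (real n)) \<longlonglongrightarrow> L"
      using filterlim_compose[OF lim filterlim_real_sequentially] by (simp add: o_def)
    moreover have "eventually (\<lambda>n. \<phi> (real n) = phi_ext \<phi> (real n)) sequentially"
      using eventually_ge_at_top[of "1::nat"] by eventually_elim (simp add: phi_ext_def)
    ultimately show ?thesis by (rule Lim_transform_eventually)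
  qed
  have inc: "incseq (\<lambda>n. phi_ext \<phi> (real n))"
    by (auto simp: incseq_def intro!: phi_ext_mono[OF mono pos])
  have "phi_ext \<phi> 1 \<le> L"
    by (rule LIMSEQ_le_const[OF seq]) (auto intro!: exI[of _ 1] phi_ext_mono[OF mono pos])
  then have Lpos: "L > 0" using pos[rule_format, of 1] by (simp add: phi_ext_def)
  have "(\<lambda>n. ennreal (phi_ext \<phi> (real n))) \<longlonglongrightarrow> ennreal L" by (rule tendsto_ennrealI[OF seq])
  moreover have "(\<lambda>n. ennreal (phi_ext \<phi> (real n))) \<longlonglongrightarrow> (SUP n. ennreal (phi_ext \<phi> (real n)))"
    by (rule LIMSEQ_SUP) (use inc in \<open>auto simp: incseq_def intro: ennreal_leI\<close>)
  ultimately have "(SUP n. ennreal (phi_ext \<phi> (real n))) = ennreal L" using LIMSEQ_unique by blast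
  then have muL: "emeasure (interval_measure (phi_ext \<phi>)) {0<..} = ennreal L"
    using mu_total[OF mono pos concave lim0] by simp
  define T where "T x = (\<lambda>t. x (idx t) / L)" for x :: "nat \<Rightarrow> real"
  have norm: "lorentz_norm \<phi> (T x) = ennreal (linf_norm x)" if x: "x \<in> linf" for x
  proof -
    have bx: "bounded (range x)" using x by (simp add: linf_def)
    have bdd: "bdd_above (range (\<lambda>n. \<bar>x n\<bar>))"
      using bx unfolding bounded_iff bdd_above_def by (auto simp: real_norm_def)
    obtain a where a: "\<And>n. \<bar>x n\<bar> \<le> a" using bx unfolding bounded_iff by auto
    have b2: "bounded (range (\<lambda>n. x n / L))"
      unfolding bounded_iff using a Lpos
      by (auto simp: abs_div intro!: exI[of _ "a / L"] divide_right_mono)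
    have M0: "0 \<le> linf_norm x"
      unfolding linf_norm_def by (rule order.trans[OF abs_ge_zero cSUP_upper[OF _ bdd]]) simp
    have r: "rearr (T x) t = ennreal (linf_norm x / L)" for t
      using rearr_idx[OF b2, of t] SUP_div[OF Lpos bdd] Lpos
      by (simp add: T_def linf_norm_def abs_div)
    have "lorentz_norm \<phi> (T x) = (\<integral>\<^sup>+ t\<in>{0<..}. ennreal (linf_norm x / L) \<partial>interval_measure (phi_ext \<phi>))"
      unfolding lorentz_norm_def r ..
    also have "\<dots> = ennreal (linf_norm x / L) * ennreal L"
      by (subst nn_integral_cmult_indicator) (auto simp: muL)
    also have "\<dots> = ennreal (linf_norm x)"
      using Lpos M0 by (simp add: ennreal_mult[symmetric])
    finally show ?thesis .
  qed
  have "lattice_isometric_embedding \<phi> T"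
    unfolding lattice_isometric_embedding_def
  proof (intro conjI ballI allI)
    fix x assume x: "x \<in> linf"
    show "in_lorentz \<phi> (T x)"
      unfolding in_lorentz_def using norm[OF x] idx_comp_meas[of "\<lambda>n. x n / L"]
      by (simp add: T_def)
  next
    fix x y a b
    show "AE t in halfline. T (\<lambda>n. a * x n + b * y n) t = a * T x t + b * T y t"
      by (simp add: T_def add_divide_distrib)
  next
    fix x y
    show "AE t in halfline. T (\<lambda>n. max (x n) (y n)) t = max (T x t) (T y t)"
      using Lpos by (auto simp: T_def max_def divide_right_mono divide_le_cancel intro!: AE_I2)
  next
    fix x assume "x \<in> linf"
    then show "lorentz_norm \<phi> (T x) = ennreal (linf_norm x)" by (rule norm)
  qed
  then show ?thesis unfolding contains_lattice_isometric_linf_def by blast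
qed



lemma rearr_antimono: "t1 \<le> t2 \<Longrightarrow> rearr f t2 \<le> rearr f t1"
  unfolding rearr_def by (rule Inf_superset_mono) (auto intro: order.trans ennreal_leI)

lemma rearr_meas: "rearr f \<in> borel_measurable (interval_measure F)"
proof (rule borel_measurableI_greater)
  fix y
  have "is_interval {x. y < rearr f x}"
    unfolding is_interval_1 using rearr_antimono by (blast intro: less_le_trans)
  then have "{x. y < rearr f x} \<in> sets borel" by (rule real_interval_borel_measurable)
  then show "{x \<in> space (interval_measure F). y < rearr f x} \<in> sets (interval_measure F)" by simp
qed

lemma ennreal_suminf_tendsto0:
  fixes a :: "nat \<Rightarrow> ennreal"
  assumes "(\<Sum>i. a i) < top"
  shows "a \<longlonglongrightarrow> 0"
proof -
  have fin: "a i < top" for i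
  proof -
    have "a i \<le> (\<Sum>i. a i)" using sum_le_suminf[OF summableI, of "{i}" a] by simp
    then show ?thesis using assms by (rule le_less_trans)
  qed
  define b where "b i = enn2real (a i)" for i
  have ab: "a i = ennreal (b i)" for i using fin[of i] by (simp add: b_def less_top ennreal_enn2real)
  have "summable b"
  proof (rule summable_suminf_not_top)
    show "0 \<le> b i" for i by (simp add: b_def)
    have "(\<Sum>i. ennreal (b i)) = (\<Sum>i. a i)" using ab by simp
    then show "(\<Sum>i. ennreal (b i)) \<noteq> top" using assms by simp
  qed
  then have "b \<longlonglongrightarrow> 0" by (rule summable_LIMSEQ_zero)
  then have "(\<lambda>i. ennreal (b i)) \<longlonglongrightarrow> ennreal 0" by (rule tendsto_ennrealI)
  moreover have "a = (\<lambda>i. ennreal (b i))" using ab by (intro ext) simp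
  ultimately show ?thesis by simp
qed

lemma mono_bounded_tendsto:
  fixes \<phi> :: "real \<Rightarrow> real"
  assumes mono: "mono_on {0<..} \<phi>" and B: "\<And>n::nat. n \<ge> 1 \<Longrightarrow> \<phi> (real n) \<le> B"
  shows "\<exists>L. (\<phi> \<longlongrightarrow> L) at_top"
proof -
  have bnd: "\<phi> t \<le> B" if "t > 0" for t
  proof -
    have "t \<le> real (nat \<lceil>t\<rceil>)" by linarith
    moreover have "nat \<lceil>t\<rceil> \<ge> 1" using that by linarith
    ultimately show ?thesis using mono_onD[OF mono, of t "real (nat \<lceil>t\<rceil>)"] B[of "nat \<lceil>t\<rceil>"] that by auto
  qed
  have bdd: "bdd_above (\<phi> ` {0<..})" using bnd by (auto simp: bdd_above_def)
  define S where "S = Sup (\<phi> ` {0<..})"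
  have "(\<phi> \<longlongrightarrow> S) at_top"
  proof (rule order_tendstoI)
    fix y assume "y < S"
    then obtain t0 where t0: "t0 > 0" "y < \<phi> t0" unfolding S_def using less_cSup_iff[OF _ bdd] by auto
    show "eventually (\<lambda>t. y < \<phi> t) at_top"
      using eventually_ge_at_top[of t0]
    proof eventually_elim
      fix t assume "t0 \<le> t"
      then have "\<phi> t0 \<le> \<phi> t" using mono_onD[OF mono, of t0 t] t0 by auto
      then show "y < \<phi> t" using t0 by simp
    qed
  next
    fix y assume "S < y"
    show "eventually (\<lambda>t. \<phi> t < y) at_top"
      using eventually_gt_at_top[of 0]
      proof eventually_elim
        fix t :: real assume "t > 0"
        then have "\<phi> t \<le> S" unfolding S_def by (intro cSup_upper[OF _ bdd]) auto
        then show "\<phi> t < y" using \<open>S < y\<close> by simp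
      qed
  qed
  then show ?thesis by blast
qed



lemma linfI: "(\<And>k. \<bar>x k\<bar> \<le> B) \<Longrightarrow> x \<in> linf"
  unfolding linf_def bounded_iff by (auto simp: real_norm_def)

lemma forward:
  fixes \<phi> :: "real \<Rightarrow> real"
  assumes mono: "mono_on {0<..} \<phi>"
    and concave: "concave_on {0<..} \<phi>"
    and pos: "\<forall>t>0. \<phi> t > 0"
    and lim0: "(\<phi> \<longlongrightarrow> 0) (at_right 0)"
    and C: "contains_lattice_isometric_linf \<phi>"
  shows "\<exists>L. (\<phi> \<longlongrightarrow> L) at_top"
proof (rule ccontr)
  assume nolim: "\<not> (\<exists>L. (\<phi> \<longlongrightarrow> L) at_top)"
  let ?\<mu> = "interval_measure (phi_ext \<phi>)"
  have mu_top: "emeasure ?\<mu> {0<..} = top"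
  proof (rule ccontr)
    assume "emeasure ?\<mu> {0<..} \<noteq> top"
    then have fin: "(SUP n::nat. ennreal (phi_ext \<phi> (real n))) \<noteq> top"
      using mu_total[OF mono pos concave lim0] by simp
    define B where "B = enn2real (SUP n::nat. ennreal (phi_ext \<phi> (real n)))"
    have "\<phi> (real n) \<le> B" if "n \<ge> 1" for n
    proof -
      have "ennreal (phi_ext \<phi> (real n)) \<le> (SUP n::nat. ennreal (phi_ext \<phi> (real n)))"
        by (rule SUP_upper) simp
      also have "\<dots> = ennreal B" using fin unfolding B_def by (metis ennreal_enn2real_if)
      finally have "phi_ext \<phi> (real n) \<le> B"
        by (subst (asm) ennreal_le_iff) (auto simp: B_def)
      then show ?thesis using that by (simp add: phi_ext_def)
    qed
    then have "\<exists>L. (\<phi> \<longlongrightarrow> L) at_top" by (intro mono_bounded_tendsto[OF mono]) auto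
    with nolim show False by simp
  qed
  from C obtain T where T: "lattice_isometric_embedding \<phi> T"
    unfolding contains_lattice_isometric_linf_def by blast
  have inL: "\<And>x. x \<in> linf \<Longrightarrow> in_lorentz \<phi> (T x)"
    and lin: "\<And>x y a b. x \<in> linf \<Longrightarrow> y \<in> linf \<Longrightarrow>
        AE t in halfline. T (\<lambda>n. a * x n + b * y n) t = a * T x t + b * T y t"
    and mx: "\<And>x y. x \<in> linf \<Longrightarrow> y \<in> linf \<Longrightarrow>
        AE t in halfline. T (\<lambda>n. max (x n) (y n)) t = max (T x t) (T y t)"
    and nrm: "\<And>x. x \<in> linf \<Longrightarrow> lorentz_norm \<phi> (T x) = ennreal (linf_norm x)"
    using T unfolding lattice_isometric_embedding_def by blast+
  have z: "(\<lambda>n. 0::real) \<in> linf" by (rule linfI[of _ 0]) simp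
  have T0: "AE t in halfline. T (\<lambda>n. 0) t = 0"
    using lin[OF z z, of 0 0] by simp
  have posT: "AE t in halfline. 0 \<le> T x t" if x: "x \<in> linf" and xp: "\<And>k. 0 \<le> x k" for x
  proof -
    have e: "(\<lambda>n. max (x n) 0) = x" using xp by (intro ext) (simp add: max_absorb1)
    have "AE t in halfline. T (\<lambda>n. max (x n) 0) t = max (T x t) (T (\<lambda>n. 0) t)"
      using mx[OF x z] by simp
    then show ?thesis using T0 unfolding e by eventually_elim simp
  qed
  define one :: "nat \<Rightarrow> real" where "one = (\<lambda>k. 1)"
  define \<delta> :: "nat \<Rightarrow> nat \<Rightarrow> real" where "\<delta> n = (\<lambda>k. if k = n then 1 else 0)" for n
  have one_l: "one \<in> linf" by (rule linfI[of _ 1]) (simp add: one_def)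
  have d_l: "\<delta> n \<in> linf" for n by (rule linfI[of _ 1]) (simp add: \<delta>_def)
  define f where "f = T one"
  define g where "g n = T (\<delta> n)" for n
  have F1: "AE t in halfline. \<forall>n. 0 \<le> g n t"
    unfolding AE_all_countable g_def by (intro allI posT d_l) (simp add: \<delta>_def)
  have F2: "AE t in halfline. \<forall>n. g n t \<le> f t"
    unfolding AE_all_countable
  proof
    fix n
    define w where "w = (\<lambda>k. 1 * one k + (-1) * \<delta> n k)"
    have wl: "w \<in> linf" by (rule linfI[of _ 1]) (simp add: w_def one_def \<delta>_def)
    have "AE t in halfline. 0 \<le> T w t" by (rule posT[OF wl]) (simp add: w_def one_def \<delta>_def)
    moreover have "AE t in halfline. T w t = 1 * T one t + (-1) * T (\<delta> n) t"
      unfolding w_def by (rule lin[OF one_l d_l])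
    ultimately show "AE t in halfline. g n t \<le> f t"
      by eventually_elim (simp add: f_def g_def)
  qed
  have F3: "AE t in halfline. \<forall>n m. n \<noteq> m \<longrightarrow> g n t = 0 \<or> g m t = 0"
    unfolding AE_all_countable
  proof (intro allI)
    fix n m
    have e: "(\<lambda>k. max (\<delta> n k) (\<delta> m k)) = (\<lambda>k. 1 * \<delta> n k + 1 * \<delta> m k)" if "n \<noteq> m"
      using that by (auto simp: \<delta>_def)
    show "AE t in halfline. n \<noteq> m \<longrightarrow> g n t = 0 \<or> g m t = 0"
    proof (cases "n = m")
      case True then show ?thesis by simp
    next
      case False
      have "AE t in halfline. T (\<lambda>k. max (\<delta> n k) (\<delta> m k)) t = max (T (\<delta> n) t) (T (\<delta> m) t)"
        by (rule mx[OF d_l d_l])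
      moreover have "AE t in halfline. T (\<lambda>k. 1 * \<delta> n k + 1 * \<delta> m k) t = 1 * T (\<delta> n) t + 1 * T (\<delta> m) t"
        by (rule lin[OF d_l d_l])
      ultimately show ?thesis using F1 unfolding e[OF False]
        by eventually_elim (auto simp: g_def max_def split: if_splits)
    qed
  qed
  have fm[measurable]: "f \<in> borel_measurable halfline" and fn: "lorentz_norm \<phi> f < \<infinity>"
    using inL[OF one_l] unfolding in_lorentz_def f_def by auto
  have gm[measurable]: "g n \<in> borel_measurable halfline" for n
    using inL[OF d_l] unfolding in_lorentz_def g_def by auto
  have dn: "linf_norm (\<delta> n) = 1" for n
    unfolding linf_norm_def by (rule cSup_eq_maximum) (auto simp: \<delta>_def intro!: image_eqI[of _ _ n])
  have gn: "lorentz_norm \<phi> (g n) = 1" for n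
    using nrm[OF d_l] dn by (simp add: g_def)
  have dist_le: "distfun (g n) s \<le> distfun f s" for n s
    unfolding distfun_def
  proof (rule emeasure_mono_AE)
    show "{x \<in> space halfline. s < ennreal \<bar>f x\<bar>} \<in> sets halfline" by (rule distfun_sets[OF fm])
    show "AE x\<in>{x \<in> space halfline. s < ennreal \<bar>g n x\<bar>} in halfline. x \<in> {x \<in> space halfline. s < ennreal \<bar>f x\<bar>}"
      using F1 F2
    proof eventually_elim
      case (elim x)
      then have "ennreal \<bar>g n x\<bar> \<le> ennreal \<bar>f x\<bar>" by (intro ennreal_leI) (auto intro: order.trans)
      then show ?case by (auto intro: less_le_trans)
    qed
  qed
  have rearr_le: "rearr (g n) t \<le> rearr f t" for n t
    unfolding rearr_def by (rule Inf_superset_mono) (auto intro: order.trans[OF dist_le])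
  have dist_fin: "distfun f (ennreal s) < top" if s0: "0 < s" for s
  proof (rule ccontr)
    assume "\<not> distfun f (ennreal s) < top"
    then have dtop: "distfun f (ennreal s) = top" using top.not_eq_extremum by blast
    have rl: "ennreal s \<le> rearr f t" for t
      unfolding rearr_def
    proof (rule Inf_greatest)
      fix s' assume "s' \<in> {s. distfun f s \<le> ennreal t}"
      then have s': "distfun f s' \<le> ennreal t" by simp
      show "ennreal s \<le> s'"
      proof (rule ccontr)
        assume "\<not> ennreal s \<le> s'"
        then have lt: "s' < ennreal s" by simp
        have "distfun f (ennreal s) \<le> distfun f s'"
          unfolding distfun_def
          by (rule emeasure_mono) (use lt distfun_sets[OF fm, of s'] in \<open>auto intro: less_trans\<close>)
        then have "top \<le> ennreal t" using dtop s' by simp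
        then show False by (simp add: top_unique)
      qed
    qed
    have "(\<integral>\<^sup>+ t\<in>{0<..}. ennreal s \<partial>?\<mu>) \<le> lorentz_norm \<phi> f"
      unfolding lorentz_norm_def
      by (rule nn_integral_mono) (auto intro: mult_right_mono rl)
    moreover have "(\<integral>\<^sup>+ t\<in>{0<..}. ennreal s \<partial>?\<mu>) = top"
      using s0 by (subst nn_integral_cmult_indicator) (auto simp: mu_top ennreal_top_mult_left)
    ultimately show False using fn by (simp add: top_unique)
  qed
  have "AE t in halfline. (\<forall>n. 0 \<le> g n t) \<and> (\<forall>n. g n t \<le> f t) \<and> (\<forall>n m. n \<noteq> m \<longrightarrow> g n t = 0 \<or> g m t = 0)"
    using F1 F2 F3 by eventually_elim simp
  then obtain N where N: "\<And>t. t \<in> space halfline - N \<Longrightarrow> (\<forall>n. 0 \<le> g n t) \<and> (\<forall>n. g n t \<le> f t) \<and> (\<forall>n m. n \<noteq> m \<longrightarrow> g n t = 0 \<or> g m t = 0)"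
    and Nnull: "N \<in> null_sets halfline" by (rule AE_E3) blast
  have dist_to0: "(\<lambda>n. distfun (g n) (ennreal s)) \<longlonglongrightarrow> 0" if s0: "0 < s" for s
  proof -
    define E where "E n = {x \<in> space halfline. ennreal s < ennreal \<bar>g n x\<bar>} - N" for n
    have Es: "E n \<in> sets halfline" for n
      unfolding E_def using distfun_sets[OF gm] Nnull by auto
    have Emeas: "emeasure halfline (E n) = distfun (g n) (ennreal s)" for n
      unfolding E_def distfun_def by (rule emeasure_Diff_null_set[OF Nnull distfun_sets[OF gm]])
    have disj: "disjoint_family E"
      unfolding disjoint_family_on_def
    proof (intro ballI impI)
      fix n m :: nat assume "n \<noteq> m"
      show "E n \<inter> E m = {}"
      proof (rule ccontr)
        assume "E n \<inter> E m \<noteq> {}"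
        then obtain x where xn: "x \<in> E n" and xm: "x \<in> E m" by auto
        then have "x \<in> space halfline - N" by (auto simp: E_def)
        from N[OF this] \<open>n \<noteq> m\<close> have "g n x = 0 \<or> g m x = 0" by blast
        then show False using xn xm by (auto simp: E_def)
      qed
    qed
    have "(\<Sum>n. emeasure halfline (E n)) = emeasure halfline (\<Union>n. E n)"
      by (rule suminf_emeasure) (use Es disj in auto)
    also have "\<dots> \<le> distfun f (ennreal s)"
      unfolding distfun_def
    proof (rule emeasure_mono)
      show "\<Union> (range E) \<subseteq> {x \<in> space halfline. ennreal s < ennreal \<bar>f x\<bar>}"
      proof
        fix x assume "x \<in> \<Union> (range E)"
        then obtain n where x: "x \<in> E n" by auto
        then have "x \<in> space halfline - N" by (auto simp: E_def)
        from N[OF this] have "0 \<le> g n x" "g n x \<le> f x" by blast+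
        then have "ennreal \<bar>g n x\<bar> \<le> ennreal \<bar>f x\<bar>" by (intro ennreal_leI) simp
        with x show "x \<in> {x \<in> space halfline. ennreal s < ennreal \<bar>f x\<bar>}"
          by (auto simp: E_def intro: less_le_trans)
      qed
    qed (rule distfun_sets[OF fm])
    also have "\<dots> < top" by (rule dist_fin[OF s0])
    finally have "(\<Sum>n. emeasure halfline (E n)) < top" .
    from ennreal_suminf_tendsto0[OF this] show ?thesis unfolding Emeas .
  qed
  have rearr_to0: "(\<lambda>n. rearr (g n) t) \<longlonglongrightarrow> 0" if t0: "0 < t" for t
  proof (rule order_tendstoI)
    fix y :: ennreal assume "y < 0" then show "eventually (\<lambda>n. y < rearr (g n) t) sequentially" by simp
  next
    fix y :: ennreal assume y0: "0 < y"
    then obtain z where z: "0 < z" "z < y" using dense by blast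
    then have ztop: "z \<noteq> top" using top.not_eq_extremum by fastforce
    define e where "e = enn2real z"
    have ze: "z = ennreal e" using ztop by (simp add: e_def ennreal_enn2real_if)
    have e0: "0 < e" using z(1) unfolding ze by simp
    have "eventually (\<lambda>n. distfun (g n) (ennreal e) < ennreal t) sequentially"
      by (rule order_tendstoD(2)[OF dist_to0[OF e0]]) (simp add: t0)
    then show "eventually (\<lambda>n. rearr (g n) t < y) sequentially"
    proof eventually_elim
      case (elim n)
      have "rearr (g n) t \<le> ennreal e"
        unfolding rearr_def by (rule Inf_lower) (use elim in simp)
      then show ?case using z ze by simp
    qed
  qed
  define u where "u n t = rearr (g n) t * indicator {0<..} t" for n t
  define w where "w t = rearr f t * indicator {0<..} t" for t
  have um: "u n \<in> borel_measurable ?\<mu>" for n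
    unfolding u_def using rearr_meas[of "g n" "phi_ext \<phi>"] by measurable
  have wm: "w \<in> borel_measurable ?\<mu>"
    unfolding w_def using rearr_meas[of f "phi_ext \<phi>"] by measurable
  have "limsup (\<lambda>n. integral\<^sup>N ?\<mu> (u n)) \<le> (\<integral>\<^sup>+ x. limsup (\<lambda>n. u n x) \<partial>?\<mu>)"
  proof (rule nn_integral_limsup[OF um wm])
    show "AE x in ?\<mu>. u n x \<le> w x" for n
      unfolding u_def w_def by (intro AE_I2 mult_right_mono rearr_le) simp
    show "integral\<^sup>N ?\<mu> w < \<infinity>" using fn unfolding w_def lorentz_norm_def .
  qed
  moreover have "integral\<^sup>N ?\<mu> (u n) = 1" for n
    using gn[of n] unfolding u_def lorentz_norm_def .
  moreover have "limsup (\<lambda>n. u n x) = 0" for x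
  proof (cases "0 < x")
    case True
    then have "(\<lambda>n. u n x) \<longlonglongrightarrow> 0" unfolding u_def using rearr_to0[OF True] by simp
    then show ?thesis by (intro lim_imp_Limsup) simp_all
  next
    case False
    then show ?thesis unfolding u_def by (simp add: Limsup_const)
  qed
  ultimately show False by (simp add: Limsup_const)
qed


theorem corollary3p11:
  fixes \<phi> :: "real \<Rightarrow> real"
  assumes mono: "mono_on {0<..} \<phi>"
    and concave: "concave_on {0<..} \<phi>"
    and pos: "\<forall>t>0. \<phi> t > 0"
    and lim0: "(\<phi> \<longlongrightarrow> 0) (at_right 0)"
  shows "contains_lattice_isometric_linf \<phi> \<longleftrightarrow> (\<exists>L. (\<phi> \<longlongrightarrow> L) at_top)"
  using forward[OF mono concave pos lim0] backward[OF mono concave pos lim0] by blast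

end
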